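(* Let $\mathbf A,\mathbf B$ be complete perfect DInFL-algebras and $h:\mathbf A\to\mathbf B$ a complete homomorphism. Define $h_+:J^\infty(\mathbf B)\to J^\infty(\mathbf A)$ by $h_+(b)=\bigwedge\{a\in A\mid b\leqslant h(a)\}$. Then: (i) $h_+$ is a DInFL-frame morphism from $\mathbf B_+$ to $\mathbf A_+$; (ii) if $h$ is injective then $h_+$ is surjective; (iii) if $h$ is surjective then $h_+$ is an order-embedding (with respect to the orders $\preccurlyeq$ of $\mathbf B_+$ and $\mathbf A_+$).
   Context: An InFL-algebra is $(A,\wedge,\vee,\cdot,1,\sim,-)$ with a lattice, a monoid, and $a\cdot b\leqslant c\iff a\leqslant -(b\cdot{\sim}c)\iff b\leqslant{\sim}(-c\cdot a)$; DInFL means distributive lattice reduct. Complete perfect: complete, every element the join of completely join-irreducibles ($J^\infty$) below it and meet of completely meet-irreducibles above it. A complete homomorphism preserves all operations and arbitrary joins and meets. $\kappa(j)=\bigvee\{a\mid j\not\leqslant a\}$. For a complete perfect DInFL-algebra $\mathbf A$, $\mathbf A_+=(J^\infty(\mathbf A),I_1,\preccurlyeq,\circ,{}^\sim,{}^-)$ with $I_1=\{i\in J^\infty(\mathbf A)\mid i\leqslant 1\}$, $a\preccurlyeq b$ iff $b\leqslant a$, $c\in a\circ b$ iff $c\leqslant a\cdot b$, $a^\sim={\sim}\kappa(a)$, $a^-=-\kappa(a)$. A DInFL-frame morphism between structures $(W_1,I_1,\preccurlyeq_1,\circ_1,{}^{\sim_1},{}^{-_1})$ and $(W_2,I_2,\preccurlyeq_2,\circ_2,{}^{\sim_2},{}^{-_2})$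 (with $\circ_i:W_i\times W_i\to\mathcal P(W_i)$) is a function $f:W_1\to W_2$ such that for all $x,y,z\in W_1$, $u,v\in W_2$: (M1) $x\preccurlyeq_1 y$ implies $f(x)\preccurlyeq_2 f(y)$; (M2) $z\in x\circ_1 y$ implies $f(z)\in f(x)\circ_2 f(y)$; (M3) if $f(z)\in u\circ_2 v$ then there exist $x,y\in W_1$ with $u\preccurlyeq_2 f(x)$, $v\preccurlyeq_2 f(y)$, $z\in x\circ_1 y$; (M4) $f(x^{\sim_1})=f(x)^{\sim_2}$; (M5) $f(x^{-_1})=f(x)^{-_2}$; (M6) $I_1=f^{-1}[I_2]$. *)

theory Defs
  imports Main
begin

text \<open>The non-lattice operations of an InFL-algebra whose lattice reduct is the
  (complete) lattice given by the type class of the carrier type.\<close>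
record 'a infl_ops =
  mult :: "'a \<Rightarrow> 'a \<Rightarrow> 'a"
  one  :: 'a
  sim  :: "'a \<Rightarrow> 'a"
  mns  :: "'a \<Rightarrow> 'a"

definition InFL :: "('a::lattice) infl_ops \<Rightarrow> bool" where
  "InFL A \<longleftrightarrow>
     (\<forall>a b c. mult A (mult A a b) c = mult A a (mult A b c)) \<and>
     (\<forall>a. mult A (one A) a = a \<and> mult A a (one A) = a) \<and>
     (\<forall>a b c. (mult A a b \<le> c \<longleftrightarrow> a \<le> mns A (mult A b (sim A c))) \<and>
              (mult A a b \<le> c \<longleftrightarrow> b \<le> sim A (mult A (mns A c) a)))"

definition DInFL :: "('a::lattice) infl_ops \<Rightarrow> bool" where
  "DInFL A \<longleftrightarrow> InFL A \<and> (\<forall>x y z::'a. inf x (sup y z) = sup (inf x y) (inf x z))"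

definition cji :: "'a::complete_lattice \<Rightarrow> bool" where
  "cji j \<longleftrightarrow> (\<forall>S. j = Sup S \<longrightarrow> j \<in> S)"

definition cmi :: "'a::complete_lattice \<Rightarrow> bool" where
  "cmi m \<longleftrightarrow> (\<forall>S. m = Inf S \<longrightarrow> m \<in> S)"

definition Jinf :: "'a::complete_lattice set" where
  "Jinf = {j. cji j}"

definition Minf :: "'a::complete_lattice set" where
  "Minf = {m. cmi m}"

definition perfect :: "'a::complete_lattice itself \<Rightarrow> bool" where
  "perfect _ \<longleftrightarrow> (\<forall>a::'a. a = Sup {j \<in> Jinf. j \<le> a} \<and> a = Inf {m \<in> Minf. a \<le> m})"

text \<open>Complete perfect DInFL-algebra (completeness is given by the type class).\<close>
definition cp_DInFL :: "('a::complete_lattice) infl_ops \<Rightarrow> bool" where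
  "cp_DInFL A \<longleftrightarrow> DInFL A \<and> perfect TYPE('a)"

definition complete_hom ::
  "('a::complete_lattice) infl_ops \<Rightarrow> ('b::complete_lattice) infl_ops \<Rightarrow> ('a \<Rightarrow> 'b) \<Rightarrow> bool" where
  "complete_hom A B h \<longleftrightarrow>
     (\<forall>x y. h (mult A x y) = mult B (h x) (h y)) \<and> h (one A) = one B \<and>
     (\<forall>x. h (sim A x) = sim B (h x)) \<and> (\<forall>x. h (mns A x) = mns B (h x)) \<and>
     (\<forall>x y. h (inf x y) = inf (h x) (h y)) \<and> (\<forall>x y. h (sup x y) = sup (h x) (h y)) \<and>
     (\<forall>S. h (Sup S) = Sup (h ` S)) \<and> (\<forall>S. h (Inf S) = Inf (h ` S))"

definition kappa :: "'a::complete_lattice \<Rightarrow> 'a" where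
  "kappa j = Sup {a. \<not> j \<le> a}"

definition frm_I :: "('a::complete_lattice) infl_ops \<Rightarrow> 'a set" where
  "frm_I A = {i \<in> Jinf. i \<le> one A}"

definition frm_le :: "'a::complete_lattice \<Rightarrow> 'a \<Rightarrow> bool" where
  "frm_le a b \<longleftrightarrow> b \<le> a"

definition frm_circ :: "('a::complete_lattice) infl_ops \<Rightarrow> 'a \<Rightarrow> 'a \<Rightarrow> 'a set" where
  "frm_circ A a b = {c \<in> Jinf. c \<le> mult A a b}"

definition frm_sim :: "('a::complete_lattice) infl_ops \<Rightarrow> 'a \<Rightarrow> 'a" where
  "frm_sim A a = sim A (kappa a)"

definition frm_mns :: "('a::complete_lattice) infl_ops \<Rightarrow> 'a \<Rightarrow> 'a" where
  "frm_mns A a = mns A (kappa a)"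

definition frame_morphism ::
  "'a set \<Rightarrow> 'a set \<Rightarrow> ('a \<Rightarrow> 'a \<Rightarrow> bool) \<Rightarrow> ('a \<Rightarrow> 'a \<Rightarrow> 'a set) \<Rightarrow> ('a \<Rightarrow> 'a) \<Rightarrow> ('a \<Rightarrow> 'a) \<Rightarrow>
   'b set \<Rightarrow> 'b set \<Rightarrow> ('b \<Rightarrow> 'b \<Rightarrow> bool) \<Rightarrow> ('b \<Rightarrow> 'b \<Rightarrow> 'b set) \<Rightarrow> ('b \<Rightarrow> 'b) \<Rightarrow> ('b \<Rightarrow> 'b) \<Rightarrow>
   ('a \<Rightarrow> 'b) \<Rightarrow> bool" where
  "frame_morphism W1 I1 le1 c1 s1 m1 W2 I2 le2 c2 s2 m2 f \<longleftrightarrow>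
     f ` W1 \<subseteq> W2 \<and>
     (\<forall>x\<in>W1. \<forall>y\<in>W1. le1 x y \<longrightarrow> le2 (f x) (f y)) \<and>
     (\<forall>x\<in>W1. \<forall>y\<in>W1. \<forall>z\<in>W1. z \<in> c1 x y \<longrightarrow> f z \<in> c2 (f x) (f y)) \<and>
     (\<forall>z\<in>W1. \<forall>u\<in>W2. \<forall>v\<in>W2. f z \<in> c2 u v \<longrightarrow>
        (\<exists>x\<in>W1. \<exists>y\<in>W1. le2 u (f x) \<and> le2 v (f y) \<and> z \<in> c1 x y)) \<and>
     (\<forall>x\<in>W1. f (s1 x) = s2 (f x)) \<and>
     (\<forall>x\<in>W1. f (m1 x) = m2 (f x)) \<and>
     I1 = {x \<in> W1. f x \<in> I2}"

definition lower_adj :: "('a::complete_lattice \<Rightarrow> 'b::complete_lattice) \<Rightarrow> 'b \<Rightarrow> 'a" where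
  "lower_adj h b = Inf {a. b \<le> h a}"

end

theory Submission
  imports Defs
begin

section \<open>Residuation facts\<close>

lemma res1: "InFL A \<Longrightarrow> mult A a b \<le> c \<longleftrightarrow> a \<le> mns A (mult A b (sim A c))"
  unfolding InFL_def by blast
lemma res2: "InFL A \<Longrightarrow> mult A a b \<le> c \<longleftrightarrow> b \<le> sim A (mult A (mns A c) a)"
  unfolding InFL_def by blast
lemma unitL: "InFL A \<Longrightarrow> mult A (one A) a = a" unfolding InFL_def by blast
lemma unitR: "InFL A \<Longrightarrow> mult A a (one A) = a" unfolding InFL_def by blast

lemma sim_mns: assumes "InFL A" shows "sim A (mns A c) = (c::'a::lattice)"
proof -
  have "\<And>b. b \<le> c \<longleftrightarrow> b \<le> sim A (mns A c)"
    using res2[OF assms, of "one A" b c for b] unitL[OF assms] unitR[OF assms] by simp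
  then show ?thesis by (meson order.antisym order.refl)
qed

lemma mns_sim: assumes "InFL A" shows "mns A (sim A c) = (c::'a::lattice)"
proof -
  have "\<And>b. b \<le> c \<longleftrightarrow> b \<le> mns A (sim A c)"
    using res1[OF assms, of b "one A" c for b] unitL[OF assms] unitR[OF assms] by simp
  then show ?thesis by (meson order.antisym order.refl)
qed

lemma mult_mono1: assumes "InFL A" "a \<le> (a'::'a::lattice)" shows "mult A a b \<le> mult A a' b"
proof -
  have "a' \<le> mns A (mult A b (sim A (mult A a' b)))" using res1[OF assms(1)] by blast
  then show ?thesis using assms res1[OF assms(1)] by (meson order_trans)
qed

lemma mult_mono2: assumes "InFL A" "b \<le> (b'::'a::lattice)" shows "mult A a b \<le> mult A a b'"
proof -
  have "b' \<le> sim A (mult A (mns A (mult A a b')) a)" using res2[OF assms(1)] by blast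
  then show ?thesis using assms res2[OF assms(1)] by (meson order_trans)
qed

lemma mult_Sup1: assumes "InFL A"
  shows "mult A (Sup S) b = Sup ((\<lambda>a. mult A a (b::'a::complete_lattice)) ` S)"
proof (rule order.antisym)
  have "\<forall>s\<in>S. s \<le> mns A (mult A b (sim A (Sup ((\<lambda>a. mult A a b) ` S))))"
    using res1[OF assms] by (meson SUP_upper)
  then show "mult A (Sup S) b \<le> Sup ((\<lambda>a. mult A a b) ` S)"
    using res1[OF assms] by (meson Sup_least)
  show "Sup ((\<lambda>a. mult A a b) ` S) \<le> mult A (Sup S) b"
    by (rule SUP_least) (simp add: Sup_upper assms mult_mono1)
qed

lemma mult_Sup2: assumes "InFL A"
  shows "mult A b (Sup S) = Sup ((\<lambda>a. mult A b a) ` (S::'a::complete_lattice set))"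
proof (rule order.antisym)
  have "\<forall>s\<in>S. s \<le> sim A (mult A (mns A (Sup ((\<lambda>a. mult A b a) ` S))) b)"
    using res2[OF assms] by (meson SUP_upper)
  then show "mult A b (Sup S) \<le> Sup ((\<lambda>a. mult A b a) ` S)"
    using res2[OF assms] by (meson Sup_least)
  show "Sup ((\<lambda>a. mult A b a) ` S) \<le> mult A b (Sup S)"
    by (rule SUP_least) (simp add: Sup_upper assms mult_mono2)
qed

lemma mns_anti: assumes "InFL A" "x \<le> (y::'a::lattice)" shows "mns A y \<le> mns A x"
proof -
  define c where "c = mns A (one A)"
  have sc: "sim A c = one A" using sim_mns[OF assms(1)] c_def by simp
  have ex: "\<And>z. mns A z = mns A (mult A z (sim A c))" using sc unitR[OF assms(1)] by simp
  have "mult A (mns A y) y \<le> c" using res1[OF assms(1)] ex by simp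
  then have "mult A (mns A y) x \<le> c" using mult_mono2[OF assms] order_trans by blast
  then show ?thesis using res1[OF assms(1)] ex by simp
qed

lemma sim_anti: assumes "InFL A" "x \<le> (y::'a::lattice)" shows "sim A y \<le> sim A x"
proof -
  define c where "c = sim A (one A)"
  have sc: "mns A c = one A" using mns_sim[OF assms(1)] c_def by simp
  have ex: "\<And>z. sim A z = sim A (mult A (mns A c) z)" using sc unitL[OF assms(1)] by simp
  have "mult A y (sim A y) \<le> c" using res2[OF assms(1)] ex by simp
  then have "mult A x (sim A y) \<le> c" using mult_mono1[OF assms] order_trans by blast
  then show ?thesis using res2[OF assms(1)] ex by simp
qed

lemma mns_iff: assumes "InFL A" shows "(x::'a::lattice) \<le> y \<longleftrightarrow> mns A y \<le> mns A x"
  using mns_anti[OF assms] sim_anti[OF assms] sim_mns[OF assms] by metis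

lemma sim_iff: assumes "InFL A" shows "(x::'a::lattice) \<le> y \<longleftrightarrow> sim A y \<le> sim A x"
  using mns_anti[OF assms] sim_anti[OF assms] mns_sim[OF assms] by metis

section \<open>Join primeness\<close>

lemma jprime_kappa:
  fixes j :: "'a::complete_lattice"
  assumes dist: "\<forall>x y z::'a. inf x (sup y z) = sup (inf x y) (inf x z)"
    and perf: "perfect TYPE('a)" and j: "j \<in> Jinf"
  shows "\<not> j \<le> kappa j"
proof -
  define js where "js = Sup {x. x < j}"
  have "js \<noteq> j"
  proof
    assume "js = j"
    have "\<forall>S. j = Sup S \<longrightarrow> j \<in> S" using j by (simp add: Jinf_def cji_def)
    then have "j \<in> {x. x < j}" using \<open>js = j\<close> unfolding js_def by (metis (no_types))
    then show False by simp
  qed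
  moreover have "js \<le> j" unfolding js_def by (auto intro: Sup_least)
  ultimately have njs: "\<not> j \<le> js" by simp
  have "js = Inf {m \<in> Minf. js \<le> m}" using perf unfolding perfect_def by blast
  then obtain m where m: "m \<in> Minf" "js \<le> m" "\<not> j \<le> m"
    using njs by (metis (no_types, lifting) Inf_greatest mem_Collect_eq)
  have "kappa j \<le> m" unfolding kappa_def
  proof (rule Sup_least)
    fix a assume "a \<in> {a. \<not> j \<le> a}"
    then have na: "\<not> j \<le> a" by simp
    have "inf j a < j" using na by (metis inf.absorb_iff1 inf_le1 order.not_eq_order_implies_strict)
    then have "inf j a \<le> js" unfolding js_def by (simp add: Sup_upper)
    then have ja: "inf a j \<le> m" using m(2) by (simp add: inf_commute)
    have "inf (sup m j) (sup m a) = sup (inf (sup m j) m) (inf (sup m j) a)" using dist by blast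
    also have "\<dots> = sup m (inf a (sup m j))" by (simp add: inf_commute)
    also have "\<dots> = sup m (sup (inf a m) (inf a j))" using dist by metis
    also have "\<dots> = m" using ja by (simp add: sup_absorb1)
    finally have "m = Inf {sup m j, sup m a}" by simp
    then have "m = sup m j \<or> m = sup m a" using m(1) unfolding Minf_def cmi_def by blast
    then show "a \<le> m" using m(3) by (metis sup.orderI sup_ge2)
  qed
  then show ?thesis using m(3) order_trans by blast
qed

lemma kappa_iff:
  fixes j :: "'a::complete_lattice"
  assumes dist: "\<forall>x y z::'a. inf x (sup y z) = sup (inf x y) (inf x z)"
    and perf: "perfect TYPE('a)" and j: "j \<in> Jinf"
  shows "y \<le> kappa j \<longleftrightarrow> \<not> j \<le> y"
  using jprime_kappa[OF assms] unfolding kappa_def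
  by (metis (mono_tags, lifting) Sup_upper mem_Collect_eq order_trans)

lemma jprime_Sup:
  fixes j :: "'a::complete_lattice"
  assumes dist: "\<forall>x y z::'a. inf x (sup y z) = sup (inf x y) (inf x z)"
    and perf: "perfect TYPE('a)" and j: "j \<in> Jinf" and le: "j \<le> Sup S"
  shows "\<exists>s\<in>S. j \<le> s"
proof (rule ccontr)
  assume "\<not> ?thesis"
  then have "Sup S \<le> kappa j" using kappa_iff[OF dist perf j] by (meson Sup_least)
  then show False using le kappa_iff[OF dist perf j] by blast
qed

lemma hom_mono: assumes "complete_hom A B h" "x \<le> y" shows "h x \<le> h y"
  using assms unfolding complete_hom_def by (metis inf.absorb_iff1)

lemma adj: assumes "complete_hom A B h"
  shows "lower_adj h b \<le> a \<longleftrightarrow> b \<le> h a"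
proof
  have "h (lower_adj h b) = Inf (h ` {a. b \<le> h a})"
    using assms unfolding complete_hom_def lower_adj_def by blast
  then have u: "b \<le> h (lower_adj h b)" by (auto intro: INF_greatest)
  assume "lower_adj h b \<le> a"
  then show "b \<le> h a" using u hom_mono[OF assms] order_trans by blast
next
  assume "b \<le> h a" then show "lower_adj h b \<le> a" unfolding lower_adj_def by (simp add: Inf_lower)
qed

lemma eq_by_le: "(\<And>a. (x::'a::order) \<le> a \<longleftrightarrow> y \<le> a) \<Longrightarrow> x = y"
  by (meson order.antisym order.refl)

theorem mainTheorem15:
  fixes A :: "('a::complete_lattice) infl_ops" and B :: "('b::complete_lattice) infl_ops"
    and h :: "'a \<Rightarrow> 'b"
  assumes "cp_DInFL A" and "cp_DInFL B" and "complete_hom A B h"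
  shows "frame_morphism (Jinf :: 'b set) (frm_I B) frm_le (frm_circ B) (frm_sim B) (frm_mns B)
                        (Jinf :: 'a set) (frm_I A) frm_le (frm_circ A) (frm_sim A) (frm_mns A)
                        (lower_adj h)
       \<and> (inj h \<longrightarrow> lower_adj h ` (Jinf :: 'b set) = (Jinf :: 'a set))
       \<and> (surj h \<longrightarrow> (\<forall>x\<in>(Jinf :: 'b set). \<forall>y\<in>(Jinf :: 'b set).
                         frm_le x y \<longleftrightarrow> frm_le (lower_adj h x) (lower_adj h y)))"
proof -
  let ?g = "lower_adj h"
  have iA: "InFL A" and dA: "\<forall>x y z::'a. inf x (sup y z) = sup (inf x y) (inf x z)"
    and pA: "perfect TYPE('a)" using assms(1) unfolding cp_DInFL_def DInFL_def by blast+
  have iB: "InFL B" and dB: "\<forall>x y z::'b. inf x (sup y z) = sup (inf x y) (inf x z)"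
    and pB: "perfect TYPE('b)" using assms(2) unfolding cp_DInFL_def DInFL_def by blast+
  have hc: "complete_hom A B h" by fact
  have hmult: "\<And>x y. h (mult A x y) = mult B (h x) (h y)"
    and hone: "h (one A) = one B" and hsim: "\<And>x. h (sim A x) = sim B (h x)"
    and hmns: "\<And>x. h (mns A x) = mns B (h x)"
    and hSup: "\<And>S. h (Sup S) = Sup (h ` S)"
    using hc unfolding complete_hom_def by blast+
  note ad = adj[OF hc]
  have gmono: "\<And>x y. x \<le> y \<Longrightarrow> ?g x \<le> ?g y" using ad by (meson order.refl order_trans)
  have unit: "\<And>b. b \<le> h (?g b)" using ad by blast
  have gSup: "\<And>S. ?g (Sup S) = Sup (?g ` S)"
    by (rule eq_by_le) (simp add: ad SUP_le_iff Sup_le_iff)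
  have gJ: "?g b \<in> Jinf" if b: "b \<in> Jinf" for b
    unfolding Jinf_def cji_def
  proof (intro CollectI allI impI)
    fix S assume S: "?g b = Sup S"
    have "b \<le> Sup (h ` S)" using unit[of b] S hSup by simp
    then obtain t where t: "t \<in> h ` S" "b \<le> t" using jprime_Sup[OF dB pB b] by blast
    then obtain s where s: "s \<in> S" "t = h s" by blast
    have "?g b \<le> s" using ad t s by simp
    moreover have "s \<le> ?g b" using S s by (simp add: Sup_upper)
    ultimately show "?g b \<in> S" using s by simp
  qed
  have M1: "\<forall>x\<in>Jinf. \<forall>y\<in>Jinf. frm_le x y \<longrightarrow> frm_le (?g x) (?g y)"
    unfolding frm_le_def using gmono by blast
  have M2: "\<forall>x\<in>Jinf. \<forall>y\<in>Jinf. \<forall>z\<in>Jinf. z \<in> frm_circ B x y \<longrightarrow> ?g z \<in> frm_circ A (?g x) (?g y)"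
  proof (intro ballI impI)
    fix x y z :: 'b assume z: "z \<in> Jinf" and c: "z \<in> frm_circ B x y"
    have "z \<le> mult B x y" using c unfolding frm_circ_def by simp
    also have "\<dots> \<le> mult B (h (?g x)) y" using mult_mono1[OF iB unit] .
    also have "\<dots> \<le> mult B (h (?g x)) (h (?g y))" using mult_mono2[OF iB unit] .
    also have "\<dots> = h (mult A (?g x) (?g y))" using hmult by simp
    finally have "?g z \<le> mult A (?g x) (?g y)" using ad by simp
    then show "?g z \<in> frm_circ A (?g x) (?g y)" unfolding frm_circ_def using gJ[OF z] by simp
  qed
  have M3: "\<forall>z\<in>Jinf. \<forall>u\<in>Jinf. \<forall>v\<in>Jinf. ?g z \<in> frm_circ A u v \<longrightarrow>
        (\<exists>x\<in>Jinf. \<exists>y\<in>Jinf. frm_le u (?g x) \<and> frm_le v (?g y) \<and> z \<in> frm_circ B x y)"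
  proof (intro ballI impI)
    fix z :: 'b and u v :: 'a assume z: "z \<in> Jinf" and c: "?g z \<in> frm_circ A u v"
    have "z \<le> h (mult A u v)" using c ad unfolding frm_circ_def by simp
    also have "\<dots> = mult B (h u) (h v)" using hmult by simp
    also have "h u = Sup {x \<in> Jinf. x \<le> h u}" using pB unfolding perfect_def by blast
    also have "h v = Sup {y \<in> Jinf. y \<le> h v}" using pB unfolding perfect_def by blast
    also have "mult B (Sup {x \<in> Jinf. x \<le> h u}) (Sup {y \<in> Jinf. y \<le> h v})
       = Sup ((\<lambda>x. Sup ((\<lambda>y. mult B x y) ` {y \<in> Jinf. y \<le> h v})) ` {x \<in> Jinf. x \<le> h u})"
      by (subst mult_Sup1[OF iB]) (simp only: mult_Sup2[OF iB])
    finally have zle: "z \<le> \<dots>" .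
    obtain x where x: "x \<in> {x \<in> Jinf. x \<le> h u}"
      and zx: "z \<le> Sup ((\<lambda>y. mult B x y) ` {y \<in> Jinf. y \<le> h v})"
      using jprime_Sup[OF dB pB z zle] by blast
    obtain y where y: "y \<in> {y \<in> Jinf. y \<le> h v}" and zy: "z \<le> mult B x y"
      using jprime_Sup[OF dB pB z zx] by blast
    show "\<exists>x\<in>Jinf. \<exists>y\<in>Jinf. frm_le u (?g x) \<and> frm_le v (?g y) \<and> z \<in> frm_circ B x y"
      using x y zy z ad unfolding frm_le_def frm_circ_def by blast
  qed
  have M4: "\<forall>x\<in>Jinf. ?g (frm_sim B x) = frm_sim A (?g x)"
  proof
    fix b :: 'b assume b: "b \<in> Jinf"
    show "?g (frm_sim B b) = frm_sim A (?g b)" unfolding frm_sim_def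
    proof (rule eq_by_le)
      fix a
      have "?g (sim B (kappa b)) \<le> a \<longleftrightarrow> sim B (kappa b) \<le> h a" using ad by simp
      also have "\<dots> \<longleftrightarrow> mns B (h a) \<le> kappa b" using mns_iff[OF iB] mns_sim[OF iB] by metis
      also have "\<dots> \<longleftrightarrow> \<not> b \<le> h (mns A a)" using kappa_iff[OF dB pB b] hmns by simp
      also have "\<dots> \<longleftrightarrow> \<not> ?g b \<le> mns A a" using ad by simp
      also have "\<dots> \<longleftrightarrow> mns A a \<le> kappa (?g b)" using kappa_iff[OF dA pA gJ[OF b]] by simp
      also have "\<dots> \<longleftrightarrow> sim A (kappa (?g b)) \<le> a" using sim_iff[OF iA] sim_mns[OF iA] by metis
      finally show "?g (sim B (kappa b)) \<le> a \<longleftrightarrow> sim A (kappa (?g b)) \<le> a" .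
    qed
  qed
  have M5: "\<forall>x\<in>Jinf. ?g (frm_mns B x) = frm_mns A (?g x)"
  proof
    fix b :: 'b assume b: "b \<in> Jinf"
    show "?g (frm_mns B b) = frm_mns A (?g b)" unfolding frm_mns_def
    proof (rule eq_by_le)
      fix a
      have "?g (mns B (kappa b)) \<le> a \<longleftrightarrow> mns B (kappa b) \<le> h a" using ad by simp
      also have "\<dots> \<longleftrightarrow> sim B (h a) \<le> kappa b" using sim_iff[OF iB] sim_mns[OF iB] by metis
      also have "\<dots> \<longleftrightarrow> \<not> b \<le> h (sim A a)" using kappa_iff[OF dB pB b] hsim by simp
      also have "\<dots> \<longleftrightarrow> \<not> ?g b \<le> sim A a" using ad by simp
      also have "\<dots> \<longleftrightarrow> sim A a \<le> kappa (?g b)" using kappa_iff[OF dA pA gJ[OF b]] by simp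
      also have "\<dots> \<longleftrightarrow> mns A (kappa (?g b)) \<le> a" using mns_iff[OF iA] mns_sim[OF iA] by metis
      finally show "?g (mns B (kappa b)) \<le> a \<longleftrightarrow> mns A (kappa (?g b)) \<le> a" .
    qed
  qed
  have M6: "frm_I B = {x \<in> Jinf. ?g x \<in> frm_I A}"
    unfolding frm_I_def using gJ ad hone by auto
  have P1: "frame_morphism (Jinf :: 'b set) (frm_I B) frm_le (frm_circ B) (frm_sim B) (frm_mns B)
                        (Jinf :: 'a set) (frm_I A) frm_le (frm_circ A) (frm_sim A) (frm_mns A) ?g"
    unfolding frame_morphism_def using gJ M1 M2 M3 M4 M5 M6 by blast
  have P2: "?g ` (Jinf :: 'b set) = (Jinf :: 'a set)" if inj: "inj h"
  proof
    show "?g ` Jinf \<subseteq> Jinf" using gJ by blast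
    show "Jinf \<subseteq> ?g ` Jinf"
    proof
      fix a :: 'a assume a: "a \<in> Jinf"
      have "h (inf (?g (h a)) a) = h a"
        using hc unit[of "h a"] unfolding complete_hom_def by (simp add: inf_absorb2)
      then have "inf (?g (h a)) a = a" using inj by (simp add: inj_eq)
      then have "a \<le> ?g (h a)" by (metis inf.orderI inf_commute)
      moreover have "?g (h a) \<le> a" using ad by simp
      ultimately have "a = ?g (h a)" by simp
      also have "h a = Sup {x \<in> Jinf. x \<le> h a}" using pB unfolding perfect_def by blast
      finally have "a = Sup (?g ` {x \<in> Jinf. x \<le> h a})" using gSup by simp
      then have "a \<in> ?g ` {x \<in> Jinf. x \<le> h a}" using a unfolding Jinf_def cji_def by blast
      then show "a \<in> ?g ` Jinf" by blast
    qed
  qed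
  have P3: "\<forall>x\<in>(Jinf :: 'b set). \<forall>y\<in>(Jinf :: 'b set).
                         frm_le x y \<longleftrightarrow> frm_le (?g x) (?g y)" if s: "surj h"
  proof -
    have hg: "h (?g x) = x" for x
    proof -
      obtain a where a: "x = h a" using s by (metis surjD)
      have "?g x \<le> a" using ad a by simp
      then have "h (?g x) \<le> x" using a hom_mono[OF hc] by blast
      then show ?thesis using unit[of x] by simp
    qed
    show ?thesis unfolding frm_le_def using gmono hg ad by metis
  qed
  show ?thesis using P1 P2 P3 by blast
qed

end
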